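(* Let $p$ be a prime, $Y$ a $\mathbb{Q}$-vector space, $f:\mathbb{Q}_p\to Y$, $s\ge1$, $(N_1,\dots,N_s)\in\mathbb{Z}^s$ and $(a_1,\dots,a_s)\in\mathbb{Q}_p^s$. If $\Delta_{h_1h_2\cdots h_s}f(x)=0$ for all $x\in\mathbb{Q}_p$ and all $(h_1,\dots,h_s)\in\left(\mathbb{Q}_p\setminus(a_1+p^{-N_1}\mathbb{Z}_p)\right)\times\cdots\times\left(\mathbb{Q}_p\setminus(a_s+p^{-N_s}\mathbb{Z}_p)\right)$, then $\Delta_{h_1h_2\cdots h_s}f(x)=0$ for all $(x,h_1,\dots,h_s)\in\mathbb{Q}_p^{s+1}$.
   Context: $\mathbb{Q}_p$ is the field of $p$-adic numbers with $p$-adic absolute value $|\cdot|_p$, $\mathbb{Z}_p=\{x:|x|_p\le1\}$, and $a+p^{-N}\mathbb{Z}_p=\{a+p^{-N}z:z\in\mathbb{Z}_p\}$. $\Delta_hf(x)=f(x+h)-f(x)$ and $\Delta_{h_1h_2\cdots h_s}f(x)=\Delta_{h_1}\left(\Delta_{h_2\cdots h_s}f\right)(x)$ for $s\ge2$. *)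

theory Defs
  imports Complex_Main "HOL-Computational_Algebra.Primes"
begin

text \<open>An element x of Q_p is represented canonically by the family of its truncations
  r n = (sum of the digits of x below position n times p^i), i.e. the unique
  rational in [0, p^n) with denominator a power of p such that x - r n lies in p^n Z_p.
  The family determines x, and every family satisfying the conditions below arises
  from exactly one x in Q_p.\<close>

definition rmod :: "rat \<Rightarrow> rat \<Rightarrow> rat" where
  "rmod a m = a - m * of_int \<lfloor>a / m\<rfloor>"

definition Qp :: "nat \<Rightarrow> (int \<Rightarrow> rat) set" where
  "Qp p = {r. (\<forall>n. 0 \<le> r n \<and> r n < (of_nat p) powi n)
             \<and> (\<forall>n. r n = rmod (r (n + 1)) ((of_nat p) powi n))
             \<and> (\<exists>M. \<forall>n\<le>M. r n = 0)}"

definition padd :: "nat \<Rightarrow> (int \<Rightarrow> rat) \<Rightarrow> (int \<Rightarrow> rat) \<Rightarrow> (int \<Rightarrow> rat)" where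
  "padd p x y = (\<lambda>n. rmod (x n + y n) ((of_nat p) powi n))"

text \<open>z lies in p^k Z_p, i.e. |z|_p \<le> p^(-k), iff its truncation at k vanishes.\<close>
definition in_pZp :: "nat \<Rightarrow> int \<Rightarrow> (int \<Rightarrow> rat) \<Rightarrow> bool" where
  "in_pZp p k z \<longleftrightarrow> z k = 0"

definition pcoset :: "nat \<Rightarrow> (int \<Rightarrow> rat) \<Rightarrow> int \<Rightarrow> (int \<Rightarrow> rat) set" where
  "pcoset p a N = {padd p a z | z. z \<in> Qp p \<and> in_pZp p (- N) z}"

fun pdelta :: "nat \<Rightarrow> (int \<Rightarrow> rat) list \<Rightarrow> ((int \<Rightarrow> rat) \<Rightarrow> 'y::ab_group_add)
                 \<Rightarrow> (int \<Rightarrow> rat) \<Rightarrow> 'y" where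
  "pdelta p [] f x = f x"
| "pdelta p (h # hs) f x = pdelta p hs f (padd p x h) - pdelta p hs f x"

end

theory Submission
  imports Defs
begin

lemma rmod_shift: "rmod (c + m * of_int k) m = rmod c m"
proof (cases "m = 0")
  case True then show ?thesis by (simp add: rmod_def)
next
  case False
  have "(c + m * of_int k) / m = c/m + of_int k" using False by (simp add: field_simps)
  hence "floor ((c + m * of_int k) / m) = floor (c/m) + k" by simp
  thus ?thesis by (simp add: rmod_def algebra_simps)
qed

lemma rmod_add_right: "rmod (a + rmod b m) m = rmod (a + b) m"
proof -
  have "a + rmod b m = (a+b) + m * of_int (- floor (b/m))" by (simp add: rmod_def)
  thus ?thesis by (metis rmod_shift)
qed

lemma rmod_add_left: "rmod (rmod a m + b) m = rmod (a + b) m"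
  using rmod_add_right[of b a m] by (simp add: add.commute)

lemma rmod_diff_right: "rmod (a - rmod b m) m = rmod (a - b) m"
proof -
  have "a - rmod b m = (a-b) + m * of_int (floor (b/m))" by (simp add: rmod_def)
  thus ?thesis by (metis rmod_shift)
qed

lemma rmod_diff_left: "rmod (rmod a m - b) m = rmod (a - b) m"
proof -
  have "rmod a m - b = (a-b) + m * of_int (- floor (a/m))" by (simp add: rmod_def)
  thus ?thesis by (metis rmod_shift)
qed

lemma rmod_id: "0 \<le> a \<Longrightarrow> a < m \<Longrightarrow> rmod a m = a"
proof -
  assume "0 \<le> a" "a < m"
  hence "floor (a/m) = 0" by (simp add: floor_eq_iff)
  thus ?thesis by (simp add: rmod_def)
qed

lemma rmod_bounds: "0 < m \<Longrightarrow> 0 \<le> rmod a m \<and> rmod a m < m"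
proof -
  assume m: "0 < m"
  have 1: "of_int (floor (a/m)) \<le> a/m" by (rule of_int_floor_le)
  have 2: "a/m < of_int (floor (a/m)) + 1" using floor_correct[of "a/m"] by simp
  from 1 m have "m * of_int (floor (a/m)) \<le> a"
    by (metis mult.commute pos_le_divide_eq)
  moreover from 2 m have "a < m * (of_int (floor (a/m)) + 1)"
    by (metis mult.commute pos_divide_less_eq)
  ultimately show ?thesis by (simp add: rmod_def algebra_simps)
qed

lemma rmod_rmod_mult: "rmod (rmod a (m * of_int q)) m = rmod a m"
proof -
  have "rmod a (m * of_int q) = a + m * of_int (- (q * floor (a / (m * of_int q))))"
    by (simp add: rmod_def algebra_simps)
  thus ?thesis by (metis rmod_shift)
qed

lemma padd_swap: "padd p (padd p x h) v = padd p (padd p x v) h"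
  unfolding padd_def by (rule ext) (simp only: rmod_add_left rmod_add_right, simp add: ac_simps)

lemma padd_swap2: "padd p y (padd p u v) = padd p (padd p y v) u"
  unfolding padd_def by (rule ext) (simp only: rmod_add_left rmod_add_right, simp add: ac_simps)

lemma QpD:
  assumes "x \<in> Qp p"
  shows "0 \<le> x n" "x n < (of_nat p) powi n" "x n = rmod (x (n+1)) ((of_nat p) powi n)"
  using assms unfolding Qp_def mem_Collect_eq by blast+

lemma pow_succ: "p > 0 \<Longrightarrow> (of_nat p :: rat) powi (n+1) = (of_nat p powi n) * of_int (int p)"
  by (simp add: power_int_add_1)

lemma pow_pos: "p > 0 \<Longrightarrow> (of_nat p :: rat) powi n > 0"
  by simp

lemma padd_Qp:
  assumes p: "p > 0" and x: "x \<in> Qp p" and y: "y \<in> Qp p"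
  shows "padd p x y \<in> Qp p"
proof -
  obtain M1 where M1: "\<forall>n\<le>M1. x n = 0" using x unfolding Qp_def mem_Collect_eq by blast
  obtain M2 where M2: "\<forall>n\<le>M2. y n = 0" using y unfolding Qp_def mem_Collect_eq by blast
  have b: "\<forall>n. 0 \<le> padd p x y n \<and> padd p x y n < (of_nat p) powi n"
    unfolding padd_def using rmod_bounds pow_pos[OF p] by blast
  have c: "padd p x y n = rmod (padd p x y (n + 1)) ((of_nat p) powi n)" for n
  proof -
    have "rmod (padd p x y (n + 1)) ((of_nat p) powi n)
        = rmod (x (n+1) + y (n+1)) ((of_nat p) powi n)"
      unfolding padd_def pow_succ[OF p] by (rule rmod_rmod_mult)
    also have "\<dots> = rmod (rmod (x (n+1)) ((of_nat p) powi n) + rmod (y (n+1)) ((of_nat p) powi n)) ((of_nat p) powi n)"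
      by (simp add: rmod_add_left rmod_add_right)
    also have "\<dots> = padd p x y n"
      using QpD(3)[OF x, of n] QpD(3)[OF y, of n] by (simp add: padd_def)
    finally show ?thesis by simp
  qed
  have z: "\<forall>n\<le>min M1 M2. padd p x y n = 0"
    using M1 M2 by (simp add: padd_def rmod_def)
  show ?thesis unfolding Qp_def using b c z by blast
qed

definition psub :: "nat \<Rightarrow> (int \<Rightarrow> rat) \<Rightarrow> (int \<Rightarrow> rat) \<Rightarrow> (int \<Rightarrow> rat)" where
  "psub p h u = (\<lambda>n. rmod (h n - u n) ((of_nat p) powi n))"

lemma psub_Qp:
  assumes p: "p > 0" and x: "x \<in> Qp p" and y: "y \<in> Qp p"
  shows "psub p x y \<in> Qp p"
proof -
  obtain M1 where M1: "\<forall>n\<le>M1. x n = 0" using x unfolding Qp_def mem_Collect_eq by blast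
  obtain M2 where M2: "\<forall>n\<le>M2. y n = 0" using y unfolding Qp_def mem_Collect_eq by blast
  have b: "\<forall>n. 0 \<le> psub p x y n \<and> psub p x y n < (of_nat p) powi n"
    unfolding psub_def using rmod_bounds pow_pos[OF p] by blast
  have c: "psub p x y n = rmod (psub p x y (n + 1)) ((of_nat p) powi n)" for n
  proof -
    have "rmod (psub p x y (n + 1)) ((of_nat p) powi n)
        = rmod (x (n+1) - y (n+1)) ((of_nat p) powi n)"
      unfolding psub_def pow_succ[OF p] by (rule rmod_rmod_mult)
    also have "\<dots> = rmod (rmod (x (n+1)) ((of_nat p) powi n) - rmod (y (n+1)) ((of_nat p) powi n)) ((of_nat p) powi n)"
      by (simp add: rmod_diff_left rmod_diff_right)
    also have "\<dots> = psub p x y n"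
      using QpD(3)[OF x, of n] QpD(3)[OF y, of n] by (simp add: psub_def)
    finally show ?thesis by simp
  qed
  have z: "\<forall>n\<le>min M1 M2. psub p x y n = 0"
    using M1 M2 by (simp add: psub_def rmod_def)
  show ?thesis unfolding Qp_def using b c z by blast
qed

lemma padd_psub:
  assumes h: "h \<in> Qp p"
  shows "padd p u (psub p h u) = h"
proof (rule ext)
  fix n
  have "padd p u (psub p h u) n = rmod (u n + (h n - u n)) ((of_nat p) powi n)"
    unfolding padd_def psub_def by (rule rmod_add_right)
  also have "\<dots> = h n" using QpD[OF h, of n] by (simp add: rmod_id)
  finally show "padd p u (psub p h u) n = h n" .
qed

definition pe :: "nat \<Rightarrow> int \<Rightarrow> (int \<Rightarrow> rat)" where
  "pe p j = (\<lambda>n. if j < n then (of_nat p) powi j else 0)"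

lemma pe_Qp:
  assumes p: "p > 1"
  shows "pe p j \<in> Qp p"
proof -
  have p1: "(1::rat) < of_nat p" using p by simp
  have b: "\<forall>n. 0 \<le> pe p j n \<and> pe p j n < (of_nat p) powi n"
    unfolding pe_def using power_int_strict_increasing[OF _ p1] p by auto
  have c: "pe p j n = rmod (pe p j (n + 1)) ((of_nat p) powi n)" for n
  proof -
    consider "j < n" | "j = n" | "n < j" by linarith
    then show ?thesis
    proof cases
      case 1 then show ?thesis unfolding pe_def
        using power_int_strict_increasing[OF 1 p1] p by (simp add: rmod_id)
    next
      case 2 then show ?thesis unfolding pe_def using p by (simp add: rmod_def)
    next
      case 3 then show ?thesis unfolding pe_def by (simp add: rmod_def)
    qed
  qed
  have z: "\<forall>n\<le>j. pe p j n = 0" unfolding pe_def by auto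
  show ?thesis unfolding Qp_def using b c z by blast
qed

lemma coset_val:
  assumes "w \<in> pcoset p a N"
  shows "w (-N) = rmod (a (-N)) ((of_nat p) powi (-N))"
  using assms unfolding pcoset_def padd_def in_pZp_def by auto

lemma decomp:
  assumes p: "p > 1" and h: "h \<in> Qp p"
  shows "\<exists>u v. u \<in> Qp p \<and> v \<in> Qp p \<and> padd p u v = h \<and> u n \<noteq> \<alpha> \<and> v n \<noteq> \<alpha>"
proof -
  define m where "m = (of_nat p :: rat) powi n"
  define \<beta> where "\<beta> = rmod (h n - \<alpha>) m"
  have p1: "(1::rat) < of_nat p" using p by simp
  have mpos: "m > 0" unfolding m_def using p by simp
  have lt: "\<And>i j. i < j \<Longrightarrow> (of_nat p :: rat) powi i < of_nat p powi j"
    using power_int_strict_increasing p1 by blast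
  have ex: "\<exists>j. j < n \<and> (of_nat p :: rat) powi j \<noteq> \<alpha> \<and> (of_nat p :: rat) powi j \<noteq> \<beta>"
  proof -
    have d1: "(of_nat p :: rat) powi (n-1) \<noteq> of_nat p powi (n-2)" using lt[of "n-2" "n-1"] by simp
    have d2: "(of_nat p :: rat) powi (n-1) \<noteq> of_nat p powi (n-3)" using lt[of "n-3" "n-1"] by simp
    have d3: "(of_nat p :: rat) powi (n-2) \<noteq> of_nat p powi (n-3)" using lt[of "n-3" "n-2"] by simp
    show ?thesis
    proof (cases "(of_nat p :: rat) powi (n-1) \<noteq> \<alpha> \<and> (of_nat p :: rat) powi (n-1) \<noteq> \<beta>")
      case True then show ?thesis by (intro exI[of _ "n-1"]) auto
    next
      case F1: False
      show ?thesis
      proof (cases "(of_nat p :: rat) powi (n-2) \<noteq> \<alpha> \<and> (of_nat p :: rat) powi (n-2) \<noteq> \<beta>")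
        case True then show ?thesis by (intro exI[of _ "n-2"]) auto
      next
        case False
        with F1 d1 d2 d3 show ?thesis by (intro exI[of _ "n-3"]) auto
      qed
    qed
  qed
  then obtain j where j: "j < n" "(of_nat p :: rat) powi j \<noteq> \<alpha>" "(of_nat p :: rat) powi j \<noteq> \<beta>" by blast
  define u where "u = pe p j"
  define c where "c = (of_nat p :: rat) powi j"
  have un: "u n = c" unfolding u_def pe_def c_def using j by simp
  have c0: "0 \<le> c" "c < m" unfolding c_def m_def using lt[OF j(1)] p by auto
  have uQ: "u \<in> Qp p" unfolding u_def by (rule pe_Qp[OF p])
  have vQ: "psub p h u \<in> Qp p" using psub_Qp[OF _ h uQ] p by simp
  have vn: "psub p h u n \<noteq> \<alpha>"
  proof
    assume a: "psub p h u n = \<alpha>"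
    hence "h n - c - m * of_int (floor ((h n - c)/m)) = \<alpha>"
      unfolding psub_def un m_def[symmetric] rmod_def by simp
    hence "h n - \<alpha> = c + m * of_int (floor ((h n - c)/m))" by (simp add: algebra_simps)
    hence "\<beta> = rmod c m" unfolding \<beta>_def by (simp add: rmod_shift)
    also have "\<dots> = c" using c0 by (simp add: rmod_id)
    finally show False using j(3) c_def by simp
  qed
  show ?thesis
    apply (rule exI[of _ u], rule exI[of _ "psub p h u"])
    using uQ vQ padd_psub[OF h] un j(2) c_def vn by auto
qed

lemma pdelta_append: "pdelta p (xs @ ys) f x = pdelta p xs (pdelta p ys f) x"
  by (induction xs arbitrary: x) auto

lemma pdelta_add: "pdelta p xs (\<lambda>y. F y + G y) x = pdelta p xs F x + pdelta p xs G x"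
  by (induction xs arbitrary: x) (auto simp: algebra_simps)

lemma pdelta_shift: "pdelta p xs (\<lambda>y. F (padd p y v)) x = pdelta p xs F (padd p x v)"
  by (induction xs arbitrary: x) (auto simp: padd_swap)

lemma key:
  "pdelta p (pre @ padd p u v # post) f x
   = pdelta p (pre @ u # post) f (padd p x v) + pdelta p (pre @ v # post) f x"
proof -
  define g where "g = pdelta p post f"
  have e: "\<And>w. pdelta p (w # post) f = (\<lambda>y. g (padd p y w) - g y)"
    by (rule ext) (simp add: g_def)
  have "(\<lambda>y. g (padd p y (padd p u v)) - g y)
      = (\<lambda>y. (\<lambda>z. g (padd p z u) - g z) (padd p y v) + (g (padd p y v) - g y))"
    by (rule ext) (simp add: padd_swap2)
  then have "pdelta p pre (\<lambda>y. g (padd p y (padd p u v)) - g y) x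
     = pdelta p pre (\<lambda>z. g (padd p z u) - g z) (padd p x v) + pdelta p pre (\<lambda>y. g (padd p y v) - g y) x"
    by (simp only: pdelta_add pdelta_shift[of p pre "\<lambda>z. g (padd p z u) - g z" v x])
  then show ?thesis by (simp only: pdelta_append e)
qed

lemma key_upd:
  assumes "k < length hs"
  shows "pdelta p (hs[k := padd p u v]) f x
   = pdelta p (hs[k := u]) f (padd p x v) + pdelta p (hs[k := v]) f x"
  using assms by (simp add: upd_conv_take_nth_drop key)

theorem theorem9:
  fixes p :: nat and s :: nat
    and scale :: "rat \<Rightarrow> 'y::ab_group_add \<Rightarrow> 'y"
    and f :: "(int \<Rightarrow> rat) \<Rightarrow> 'y"
    and N :: "nat \<Rightarrow> int" and a :: "nat \<Rightarrow> (int \<Rightarrow> rat)"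
  assumes "prime p"
    and "vector_space scale"
    and "s \<ge> 1"
    and "\<forall>i<s. a i \<in> Qp p"
    and "\<forall>x\<in>Qp p. \<forall>hs. length hs = s \<and> set hs \<subseteq> Qp p
            \<and> (\<forall>i<s. hs ! i \<notin> pcoset p (a i) (N i)) \<longrightarrow> pdelta p hs f x = 0"
  shows "\<forall>x\<in>Qp p. \<forall>hs. length hs = s \<and> set hs \<subseteq> Qp p \<longrightarrow> pdelta p hs f x = 0"
proof -
  have p1: "p > 1" using assms(1) prime_gt_1_nat by blast
  define Q where "Q k \<longleftrightarrow> (\<forall>x\<in>Qp p. \<forall>hs. length hs = s \<and> set hs \<subseteq> Qp p
            \<and> (\<forall>i<s. k \<le> i \<longrightarrow> hs ! i \<notin> pcoset p (a i) (N i)) \<longrightarrow> pdelta p hs f x = 0)" for k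
  have Q0: "Q 0" unfolding Q_def using assms(5) by simp
  have step: "Q (Suc k)" if ks: "k < s" and Qk: "Q k" for k
    unfolding Q_def
  proof (intro ballI allI impI)
    fix x hs assume x: "x \<in> Qp p"
      and H: "length hs = s \<and> set hs \<subseteq> Qp p \<and> (\<forall>i<s. Suc k \<le> i \<longrightarrow> hs ! i \<notin> pcoset p (a i) (N i))"
    have hk: "hs ! k \<in> Qp p" using H ks by auto
    obtain u v where uv: "u \<in> Qp p" "v \<in> Qp p" "padd p u v = hs ! k"
      "u (- N k) \<noteq> rmod (a k (- N k)) ((of_nat p) powi (- N k))"
      "v (- N k) \<noteq> rmod (a k (- N k)) ((of_nat p) powi (- N k))"
      using decomp[OF p1 hk] by blast
    have un: "u \<notin> pcoset p (a k) (N k)" using uv(4) coset_val by blast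
    have vn: "v \<notin> pcoset p (a k) (N k)" using uv(5) coset_val by blast
    have xv: "padd p x v \<in> Qp p" using padd_Qp[OF _ x uv(2)] p1 by simp
    have hs_eq: "hs = hs[k := padd p u v]" using uv(3) by simp
    have QK: "pdelta p hs' f y = 0" if "y \<in> Qp p" "length hs' = s" "set hs' \<subseteq> Qp p"
       "\<forall>i<s. k \<le> i \<longrightarrow> hs' ! i \<notin> pcoset p (a i) (N i)" for y hs'
      using Qk that unfolding Q_def by blast
    have z1: "pdelta p (hs[k := u]) f (padd p x v) = 0"
    proof (rule QK[OF xv])
      show "length (hs[k := u]) = s" using H by simp
      show "set (hs[k := u]) \<subseteq> Qp p" using H uv(1) set_update_subset_insert[of hs k u] by blast
      show "\<forall>i<s. k \<le> i \<longrightarrow> hs[k := u] ! i \<notin> pcoset p (a i) (N i)"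
        using H un by (auto simp: nth_list_update)
    qed
    have z2: "pdelta p (hs[k := v]) f x = 0"
    proof (rule QK[OF x])
      show "length (hs[k := v]) = s" using H by simp
      show "set (hs[k := v]) \<subseteq> Qp p" using H uv(2) set_update_subset_insert[of hs k v] by blast
      show "\<forall>i<s. k \<le> i \<longrightarrow> hs[k := v] ! i \<notin> pcoset p (a i) (N i)"
        using H vn by (auto simp: nth_list_update)
    qed
    have "pdelta p hs f x = pdelta p (hs[k := padd p u v]) f x" using hs_eq by simp
    also have "\<dots> = 0" using key_upd[of k hs p u v f x] H ks z1 z2 by simp
    finally show "pdelta p hs f x = 0" .
  qed
  have "Q s" by (rule dec_induct[of 0 s Q]) (use Q0 step in auto)
  thus ?thesis unfolding Q_def by auto
qed

end
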